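(* Let $\Omega\subset\mathbb{R}^N$ be a bounded open connected set, $F:\Omega\times\mathbb{R}\times\mathcal{S}(N)\to\mathbb{R}$ continuous with $\{(r,A):F(x,r,A)=0\}\neq\emptyset$ for each $x$, and $\Phi$ a proper elliptic map on $\Omega$ such that $F(x,r+s,A+P)\ge F(x,r,A)$ for all $x\in\Omega$, $(r,A)\in\Phi(x)$, $(s,P)\in\mathcal{Q}$. Let $\Theta(x):=\{(r,A)\in\Phi(x):F(x,r,A)\ge0\}$ and suppose $\Theta$ is a proper elliptic map. Then: (a) $u\in\mathrm{USC}(\Omega)$ is a $\Phi$-admissible viscosity subsolution of $F(x,u,D^2u)=0$ in $\Omega$ if and only if $u$ is $\Theta$-subharmonic in $\Omega$. (b) Provided that $F(x,r,A)>0$ for each $x\in\Omega$ and each $(r,A)\in(\Theta(x))^\circ$, a function $u\in\mathrm{LSC}(\Omega)$ is a $\Phi$-admissible viscosity supersolution of $F(x,u,D^2u)=0$ in $\Omega$ if and only if $u$ is $\Theta$-superharmonic in $\Omega$ (equivalently, $-u$ is $\tilde\Theta$-subharmonic in $\Omega$).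
   Context: $\mathcal{S}(N)$: real symmetric $N\times N$ matrices. $\mathcal{Q}:=\{(s,P): s\le0,\ P\ge0\}$. A proper elliptic map assigns to each $x\in\Omega$ a closed, nonempty set $\subsetneq\mathbb{R}\times\mathcal{S}(N)$ invariant under adding $\mathcal Q$. Dual map: $\tilde\Theta(x):=-\big[(\mathbb{R}\times\mathcal{S}(N))\setminus(\Theta(x))^\circ\big]$. $J^+_{x_0}u:=\{(\varphi(x_0),D^2\varphi(x_0)):\varphi$ is $C^2$ near $x_0$, $u\le\varphi$ near $x_0$, $u(x_0)=\varphi(x_0)\}$, $J^-_{x_0}u$ likewise with $u\ge\varphi$. $u\in\mathrm{USC}(\Omega)$ is $\Theta$-subharmonic if $J^+_{x_0}u\subset\Theta(x_0)$ for all $x_0$; $u\in\mathrm{LSC}(\Omega)$ is $\Theta$-superharmonic if $J^-_{x_0}u\subset(\mathbb{R}\times\mathcal{S}(N))\setminus(\Theta(x_0))^\circ$ for all $x_0$. $u\in\mathrm{USC}(\Omega)$ is a $\Phi$-admissible viscosity subsolution if for every $x_0\in\Omega$ and $(r,A)\in J^+_{x_0}u$: $F(x_0,r,A)\ge0$ and $(r,A)\in\Phi(x_0)$. $u\in\mathrm{LSC}(\Omega)$ is a $\Phi$-admissible viscosity supersolution if for every $x_0$ and $(r,A)\in J^-_{x_0}u$: $F(x_0,r,A)\le0$ or $(r,A)\notin(\Phi(x_0))^\circ$. *)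

theory Defs
  imports "HOL-Analysis.Analysis"
begin

definition sym_mat :: "real^'n^'n \<Rightarrow> bool" where
  "sym_mat A \<longleftrightarrow> transpose A = A"

definition Smat :: "(real^'n^'n) set" where
  "Smat = {A. sym_mat A}"

definition RS :: "(real \<times> (real^'n^'n)) set" where
  "RS = UNIV \<times> Smat"

definition RS_top :: "(real \<times> (real^'n^'n)) topology" where
  "RS_top = top_of_set RS"

definition RS_interior :: "(real \<times> (real^'n^'n)) set \<Rightarrow> (real \<times> (real^'n^'n)) set" where
  "RS_interior S = RS_top interior_of S"

definition psd :: "real^'n^'n \<Rightarrow> bool" where
  "psd P \<longleftrightarrow> (\<forall>v. v \<bullet> (P *v v) \<ge> 0)"

definition Qcone :: "(real \<times> (real^'n^'n)) set" where
  "Qcone = {(s, P). s \<le> 0 \<and> sym_mat P \<and> psd P}"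

definition proper_elliptic_map ::
  "(real^'n) set \<Rightarrow> (real^'n \<Rightarrow> (real \<times> (real^'n^'n)) set) \<Rightarrow> bool" where
  "proper_elliptic_map \<Omega> \<Theta> \<longleftrightarrow>
     (\<forall>x\<in>\<Omega>. \<Theta> x \<subseteq> RS \<and> closedin RS_top (\<Theta> x) \<and> \<Theta> x \<noteq> {} \<and> \<Theta> x \<noteq> RS \<and>
        (\<forall>(r, A)\<in>\<Theta> x. \<forall>(s, P)\<in>Qcone. (r + s, A + P) \<in> \<Theta> x))"

definition dual_map ::
  "(real^'n \<Rightarrow> (real \<times> (real^'n^'n)) set) \<Rightarrow> real^'n \<Rightarrow> (real \<times> (real^'n^'n)) set" where
  "dual_map \<Theta> x = (\<lambda>(r, A). (- r, - A)) ` (RS - RS_interior (\<Theta> x))"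

definition C2_near :: "(real^'n \<Rightarrow> real) \<Rightarrow> real^'n \<Rightarrow> (real^'n \<Rightarrow> real^'n^'n) \<Rightarrow> bool" where
  "C2_near \<phi> x0 H \<longleftrightarrow>
     (\<exists>e>0. \<exists>D :: real^'n \<Rightarrow> real^'n.
        (\<forall>y\<in>ball x0 e. (\<phi> has_derivative (\<lambda>h. D y \<bullet> h)) (at y)) \<and>
        (\<forall>y\<in>ball x0 e. (D has_derivative (\<lambda>h. H y *v h)) (at y)) \<and>
        continuous_on (ball x0 e) H \<and>
        (\<forall>y\<in>ball x0 e. sym_mat (H y)))"

definition upper_jet :: "(real^'n \<Rightarrow> real) \<Rightarrow> real^'n \<Rightarrow> (real \<times> (real^'n^'n)) set" where
  "upper_jet u x0 = {(\<phi> x0, H x0) | \<phi> H. C2_near \<phi> x0 H \<and>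
       (\<forall>\<^sub>F y in at x0. u y \<le> \<phi> y) \<and> u x0 = \<phi> x0}"

definition lower_jet :: "(real^'n \<Rightarrow> real) \<Rightarrow> real^'n \<Rightarrow> (real \<times> (real^'n^'n)) set" where
  "lower_jet u x0 = {(\<phi> x0, H x0) | \<phi> H. C2_near \<phi> x0 H \<and>
       (\<forall>\<^sub>F y in at x0. u y \<ge> \<phi> y) \<and> u x0 = \<phi> x0}"

definition usc_on :: "(real^'n) set \<Rightarrow> (real^'n \<Rightarrow> real) \<Rightarrow> bool" where
  "usc_on \<Omega> u \<longleftrightarrow> (\<forall>x\<in>\<Omega>. \<forall>t. u x < t \<longrightarrow> (\<forall>\<^sub>F y in at x within \<Omega>. u y < t))"

definition lsc_on :: "(real^'n) set \<Rightarrow> (real^'n \<Rightarrow> real) \<Rightarrow> bool" where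
  "lsc_on \<Omega> u \<longleftrightarrow> (\<forall>x\<in>\<Omega>. \<forall>t. t < u x \<longrightarrow> (\<forall>\<^sub>F y in at x within \<Omega>. t < u y))"

definition subharmonic ::
  "(real^'n) set \<Rightarrow> (real^'n \<Rightarrow> (real \<times> (real^'n^'n)) set) \<Rightarrow> (real^'n \<Rightarrow> real) \<Rightarrow> bool" where
  "subharmonic \<Omega> \<Theta> u \<longleftrightarrow> usc_on \<Omega> u \<and> (\<forall>x0\<in>\<Omega>. upper_jet u x0 \<subseteq> \<Theta> x0)"

definition superharmonic ::
  "(real^'n) set \<Rightarrow> (real^'n \<Rightarrow> (real \<times> (real^'n^'n)) set) \<Rightarrow> (real^'n \<Rightarrow> real) \<Rightarrow> bool" where
  "superharmonic \<Omega> \<Theta> u \<longleftrightarrow> lsc_on \<Omega> u \<and>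
     (\<forall>x0\<in>\<Omega>. lower_jet u x0 \<subseteq> RS - RS_interior (\<Theta> x0))"

definition admissible_subsolution ::
  "(real^'n) set \<Rightarrow> (real^'n \<Rightarrow> real \<Rightarrow> real^'n^'n \<Rightarrow> real) \<Rightarrow>
   (real^'n \<Rightarrow> (real \<times> (real^'n^'n)) set) \<Rightarrow> (real^'n \<Rightarrow> real) \<Rightarrow> bool" where
  "admissible_subsolution \<Omega> F \<Phi> u \<longleftrightarrow> usc_on \<Omega> u \<and>
     (\<forall>x0\<in>\<Omega>. \<forall>(r, A)\<in>upper_jet u x0. F x0 r A \<ge> 0 \<and> (r, A) \<in> \<Phi> x0)"

definition admissible_supersolution ::
  "(real^'n) set \<Rightarrow> (real^'n \<Rightarrow> real \<Rightarrow> real^'n^'n \<Rightarrow> real) \<Rightarrow>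
   (real^'n \<Rightarrow> (real \<times> (real^'n^'n)) set) \<Rightarrow> (real^'n \<Rightarrow> real) \<Rightarrow> bool" where
  "admissible_supersolution \<Omega> F \<Phi> u \<longleftrightarrow> lsc_on \<Omega> u \<and>
     (\<forall>x0\<in>\<Omega>. \<forall>(r, A)\<in>lower_jet u x0. F x0 r A \<le> 0 \<or> (r, A) \<notin> RS_interior (\<Phi> x0))"

end

theory Submission
  imports Defs
begin

lemma sym_neg: "sym_mat A \<Longrightarrow> sym_mat (- A)"
  unfolding sym_mat_def by (simp add: transpose_def vec_eq_iff)

lemma mvneg: "(- M) *v h = - (M *v (h::real^'n))" for M :: "real^'n^'m"
  by (simp add: matrix_vector_mult_def vec_eq_iff sum_negf)

lemma C2_neg: "C2_near \<phi> x0 H \<Longrightarrow> C2_near (\<lambda>y. - \<phi> y) x0 (\<lambda>y. - H y)"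
proof -
  assume "C2_near \<phi> x0 H"
  then obtain e D where e: "e > 0"
    and d1: "\<forall>y\<in>ball x0 e. (\<phi> has_derivative (\<lambda>h. D y \<bullet> h)) (at y)"
    and d2: "\<forall>y\<in>ball x0 e. (D has_derivative (\<lambda>h. H y *v h)) (at y)"
    and c: "continuous_on (ball x0 e) H" and s: "\<forall>y\<in>ball x0 e. sym_mat (H y)"
    unfolding C2_near_def by blast
  have a1: "\<forall>y\<in>ball x0 e. ((\<lambda>y. - \<phi> y) has_derivative (\<lambda>h. (- D y) \<bullet> h)) (at y)"
    using d1 by (auto intro: has_derivative_minus[THEN has_derivative_eq_rhs])
  have a2: "\<forall>y\<in>ball x0 e. ((\<lambda>y. - D y) has_derivative (\<lambda>h. (- H y) *v h)) (at y)"
    using d2 by (auto intro!: has_derivative_minus[THEN has_derivative_eq_rhs] simp: mvneg)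
  have a3: "continuous_on (ball x0 e) (\<lambda>y. - H y)" using c by (intro continuous_intros)
  have a4: "\<forall>y\<in>ball x0 e. sym_mat (- H y)" using s sym_neg by blast
  show ?thesis unfolding C2_near_def
    apply (rule exI[of _ e])
    apply (rule conjI[OF e])
    apply (rule exI[of _ "\<lambda>y. - D y"])
    using a1 a2 a3 a4 by blast
qed

lemma upper_jet_neg:
  "upper_jet (\<lambda>x. - u x) x0 = (\<lambda>(r, A). (- r, - A)) ` lower_jet u x0"
proof
  show "upper_jet (\<lambda>x. - u x) x0 \<subseteq> (\<lambda>(r, A). (- r, - A)) ` lower_jet u x0"
  proof
    fix p assume "p \<in> upper_jet (\<lambda>x. - u x) x0"
    then obtain \<phi> H where p: "p = (\<phi> x0, H x0)" and c: "C2_near \<phi> x0 H"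
      and ev: "\<forall>\<^sub>F y in at x0. - u y \<le> \<phi> y" and eq: "- u x0 = \<phi> x0"
      unfolding upper_jet_def by blast
    have "(- \<phi> x0, - H x0) \<in> lower_jet u x0"
      unfolding lower_jet_def
      apply (rule CollectI, rule exI[of _ "\<lambda>y. - \<phi> y"], rule exI[of _ "\<lambda>y. - H y"])
      using C2_neg[OF c] ev eq by (auto elim: eventually_mono)
    then show "p \<in> (\<lambda>(r, A). (- r, - A)) ` lower_jet u x0"
      by (auto simp: p intro!: image_eqI[where x="(- \<phi> x0, - H x0)"])
  qed
next
  show "(\<lambda>(r, A). (- r, - A)) ` lower_jet u x0 \<subseteq> upper_jet (\<lambda>x. - u x) x0"
  proof
    fix p assume "p \<in> (\<lambda>(r, A). (- r, - A)) ` lower_jet u x0"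
    then obtain q where q: "q \<in> lower_jet u x0" and p: "p = (\<lambda>(r, A). (- r, - A)) q" by blast
    then obtain \<phi> H where qq: "q = (\<phi> x0, H x0)" and c: "C2_near \<phi> x0 H"
      and ev: "\<forall>\<^sub>F y in at x0. u y \<ge> \<phi> y" and eq: "u x0 = \<phi> x0"
      unfolding lower_jet_def by blast
    have "(- \<phi> x0, - H x0) \<in> upper_jet (\<lambda>x. - u x) x0"
      unfolding upper_jet_def
      apply (rule CollectI, rule exI[of _ "\<lambda>y. - \<phi> y"], rule exI[of _ "\<lambda>y. - H y"])
      using C2_neg[OF c] ev eq by (auto elim: eventually_mono)
    then show "p \<in> upper_jet (\<lambda>x. - u x) x0" by (simp add: p qq)
  qed
qed

lemma lower_jet_RS: "lower_jet u x0 \<subseteq> RS"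
  unfolding lower_jet_def RS_def Smat_def C2_near_def by auto

lemma usc_neg: "usc_on \<Omega> (\<lambda>x. - u x) \<longleftrightarrow> lsc_on \<Omega> u"
  unfolding usc_on_def lsc_on_def
proof (intro iffI ballI allI impI)
  fix x t assume h: "\<forall>x\<in>\<Omega>. \<forall>t. - u x < t \<longrightarrow> (\<forall>\<^sub>F y in at x within \<Omega>. - u y < t)"
    and x: "x \<in> \<Omega>" and t: "t < u x"
  have "- u x < - t" using t by simp
  then have "\<forall>\<^sub>F y in at x within \<Omega>. - u y < - t" using h x by blast
  then show "\<forall>\<^sub>F y in at x within \<Omega>. t < u y" by (rule eventually_mono) simp
next
  fix x t assume h: "\<forall>x\<in>\<Omega>. \<forall>t. t < u x \<longrightarrow> (\<forall>\<^sub>F y in at x within \<Omega>. t < u y)"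
    and x: "x \<in> \<Omega>" and t: "- u x < t"
  have "- t < u x" using t by simp
  then have "\<forall>\<^sub>F y in at x within \<Omega>. - t < u y" using h x by blast
  then show "\<forall>\<^sub>F y in at x within \<Omega>. - u y < t" by (rule eventually_mono) simp
qed

theorem theorem6p5:
  fixes \<Omega> :: "(real^'n) set"
    and F :: "real^'n \<Rightarrow> real \<Rightarrow> real^'n^'n \<Rightarrow> real"
    and \<Phi> \<Theta> :: "real^'n \<Rightarrow> (real \<times> (real^'n^'n)) set"
  assumes bounded: "bounded \<Omega>" and open_\<Omega>: "open \<Omega>" and conn: "connected \<Omega>"
    and F_cont: "continuous_on (\<Omega> \<times> UNIV \<times> Smat) (\<lambda>(x, r, A). F x r A)"
    and F_zero: "\<forall>x\<in>\<Omega>. \<exists>r. \<exists>A\<in>Smat. F x r A = 0"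
    and \<Phi>_ell: "proper_elliptic_map \<Omega> \<Phi>"
    and F_mono: "\<forall>x\<in>\<Omega>. \<forall>(r, A)\<in>\<Phi> x. \<forall>(s, P)\<in>Qcone. F x (r + s) (A + P) \<ge> F x r A"
    and \<Theta>_def: "\<forall>x\<in>\<Omega>. \<Theta> x = {(r, A). (r, A) \<in> \<Phi> x \<and> F x r A \<ge> 0}"
    and \<Theta>_ell: "proper_elliptic_map \<Omega> \<Theta>"
  shows "(\<forall>u. usc_on \<Omega> u \<longrightarrow> (admissible_subsolution \<Omega> F \<Phi> u \<longleftrightarrow> subharmonic \<Omega> \<Theta> u))
       \<and> ((\<forall>x\<in>\<Omega>. \<forall>(r, A)\<in>RS_interior (\<Theta> x). F x r A > 0) \<longrightarrow>
          (\<forall>u. lsc_on \<Omega> u \<longrightarrow>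
             (admissible_supersolution \<Omega> F \<Phi> u \<longleftrightarrow> superharmonic \<Omega> \<Theta> u)
             \<and> (superharmonic \<Omega> \<Theta> u \<longleftrightarrow> subharmonic \<Omega> (dual_map \<Theta>) (\<lambda>x. - u x))))"
proof (intro conjI allI impI)
  fix u :: "real^'n \<Rightarrow> real" assume "usc_on \<Omega> u"
  show "admissible_subsolution \<Omega> F \<Phi> u \<longleftrightarrow> subharmonic \<Omega> \<Theta> u"
    unfolding admissible_subsolution_def subharmonic_def using \<Theta>_def by fastforce
next
  fix u :: "real^'n \<Rightarrow> real"
  assume pos: "\<forall>x\<in>\<Omega>. \<forall>(r, A)\<in>RS_interior (\<Theta> x). F x r A > 0" and "lsc_on \<Omega> u"
  have key: "(F x r A \<le> 0 \<or> (r, A) \<notin> RS_interior (\<Phi> x)) \<longleftrightarrow> (r, A) \<notin> RS_interior (\<Theta> x)"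
    if x: "x \<in> \<Omega>" and rA: "(r, A) \<in> RS" for x r A
  proof
    assume "(r, A) \<notin> RS_interior (\<Theta> x)"
    show "F x r A \<le> 0 \<or> (r, A) \<notin> RS_interior (\<Phi> x)"
    proof (rule ccontr)
      assume "\<not> ?thesis"
      then have Fp: "F x r A > 0" and ip: "(r, A) \<in> RS_interior (\<Phi> x)" by auto
      have cont: "continuous_on RS (\<lambda>p. F x (fst p) (snd p))"
      proof -
        have "continuous_on RS ((\<lambda>(x, r, A). F x r A) \<circ> (\<lambda>p. (x, fst p, snd p)))"
          apply (rule continuous_on_compose)
          apply (intro continuous_intros)
          apply (rule continuous_on_subset[OF F_cont])
          using x by (auto simp: RS_def)
        then show ?thesis by (simp add: o_def split_def)
      qed
      define T where "T = RS_interior (\<Phi> x) \<inter> (RS \<inter> (\<lambda>p. F x (fst p) (snd p)) -` {0<..})"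
      have o1: "openin RS_top (RS_interior (\<Phi> x))"
        unfolding RS_interior_def by simp
      have o2: "openin RS_top (RS \<inter> (\<lambda>p. F x (fst p) (snd p)) -` {0<..})"
        unfolding RS_top_def by (rule continuous_openin_preimage_gen[OF cont]) simp
      have oT: "openin RS_top T" unfolding T_def using o1 o2 by blast
      have inT: "(r, A) \<in> T" unfolding T_def using ip Fp rA by auto
      have "T \<subseteq> \<Theta> x"
      proof
        fix p assume "p \<in> T"
        then have "p \<in> \<Phi> x" "F x (fst p) (snd p) > 0"
          unfolding T_def RS_interior_def using interior_of_subset by fastforce+
        then show "p \<in> \<Theta> x" using \<Theta>_def x by (cases p) auto
      qed
      then have "(r, A) \<in> RS_interior (\<Theta> x)"
        unfolding RS_interior_def using oT inT interior_of_maximal by blast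
      with \<open>(r, A) \<notin> RS_interior (\<Theta> x)\<close> show False by blast
    qed
  next
    assume h: "F x r A \<le> 0 \<or> (r, A) \<notin> RS_interior (\<Phi> x)"
    show "(r, A) \<notin> RS_interior (\<Theta> x)"
    proof
      assume i: "(r, A) \<in> RS_interior (\<Theta> x)"
      then have "F x r A > 0" using pos x by auto
      moreover have "\<Theta> x \<subseteq> \<Phi> x" using \<Theta>_def x by auto
      then have "RS_interior (\<Theta> x) \<subseteq> RS_interior (\<Phi> x)"
        unfolding RS_interior_def by (rule interior_of_mono)
      ultimately show False using h i by auto
    qed
  qed
  have k2: "(\<forall>(r, A)\<in>lower_jet u x0. F x0 r A \<le> 0 \<or> (r, A) \<notin> RS_interior (\<Phi> x0))
      \<longleftrightarrow> lower_jet u x0 \<subseteq> RS - RS_interior (\<Theta> x0)" if "x0 \<in> \<Omega>" for x0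
  proof -
    have "\<forall>p\<in>lower_jet u x0. (case p of (r, A) \<Rightarrow> F x0 r A \<le> 0 \<or> (r, A) \<notin> RS_interior (\<Phi> x0))
       \<longleftrightarrow> p \<in> RS - RS_interior (\<Theta> x0)"
      using key[OF that] lower_jet_RS[of u x0] by auto
    then show ?thesis by blast
  qed
  show "admissible_supersolution \<Omega> F \<Phi> u \<longleftrightarrow> superharmonic \<Omega> \<Theta> u"
    unfolding admissible_supersolution_def superharmonic_def
    using k2 by (meson Ball_def)
next
  fix u :: "real^'n \<Rightarrow> real"
  assume "\<forall>x\<in>\<Omega>. \<forall>(r, A)\<in>RS_interior (\<Theta> x). F x r A > 0" and "lsc_on \<Omega> u"
  have neg_inj: "inj (\<lambda>(r::real, A::real^'n^'n). (- r, - A))"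
    by (auto simp: inj_def)
  have "upper_jet (\<lambda>x. - u x) x0 \<subseteq> dual_map \<Theta> x0 \<longleftrightarrow> lower_jet u x0 \<subseteq> RS - RS_interior (\<Theta> x0)" for x0
    unfolding upper_jet_neg dual_map_def using neg_inj by (rule inj_image_subset_iff)
  then show "superharmonic \<Omega> \<Theta> u \<longleftrightarrow> subharmonic \<Omega> (dual_map \<Theta>) (\<lambda>x. - u x)"
    unfolding superharmonic_def subharmonic_def usc_neg by simp
qed

end
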